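(* Let $L>0$, $I$ a finite index set and $\{(x_i,f_i,g_i,h_i,s_i)\}_{i\in I}\subset\mathbb{R}^n\times\mathbb{R}\times\mathbb{R}^n\times\mathbb{R}\times\mathbb{R}^n$. The following are equivalent: (i) there exist functions $f,h:\mathbb{R}^n\to\mathbb{R}$ with $f$ and $Lh-f$ convex such that for all $i\in I$: $f_i=f(x_i)$, $g_i\in\partial f(x_i)$, $h_i=h(x_i)$, $s_i\in\partial h(x_i)$, and $Ls_i-g_i\in\partial(Lh-f)(x_i)$; (ii) for all $i,j\in I$ with $i\neq j$, \[ f_i-f_j-\langle g_j,x_i-x_j\rangle\ge0,\qquad (Lh_i-f_i)-(Lh_j-f_j)-\langle Ls_j-g_j,x_i-x_j\rangle\ge0. \]
   Context: $\partial$ denotes the convex subdifferential. *)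

theory Defs
  imports "HOL-Analysis.Analysis"
begin

definition subdifferential :: "('a::real_inner \<Rightarrow> real) \<Rightarrow> 'a \<Rightarrow> 'a set" where
  "subdifferential f x = {g. \<forall>y. f y \<ge> f x + inner g (y - x)}"

end

theory Submission
  imports Defs
begin

lemma interp_aux:
  fixes X G :: "'i \<Rightarrow> 'a::real_inner" and F :: "'i \<Rightarrow> real"
  assumes fin: "finite I"
    and cond: "\<forall>i\<in>I. \<forall>j\<in>I. i \<noteq> j \<longrightarrow> F i - F j - inner (G j) (X i - X j) \<ge> 0"
  shows "\<exists>f. convex_on UNIV f \<and> (\<forall>i\<in>I. F i = f (X i) \<and> G i \<in> subdifferential f (X i))"
proof (cases "I = {}")
  case True
  then show ?thesis by (intro exI[of _ "\<lambda>_. 0"]) (simp add: convex_on_const)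
next
  case ne: False
  define f where "f y = Max ((\<lambda>j. F j + inner (G j) (y - X j)) ` I)" for y
  have ub: "F j + inner (G j) (y - X j) \<le> f y" if "j \<in> I" for j y
    unfolding f_def using fin that by (intro Max_ge) auto
  have att: "\<exists>j\<in>I. f y = F j + inner (G j) (y - X j)" for y
  proof -
    have "f y \<in> (\<lambda>j. F j + inner (G j) (y - X j)) ` I"
      unfolding f_def using fin ne by (intro Max_in) auto
    then show ?thesis by auto
  qed
  have cvx: "convex_on UNIV f"
    unfolding convex_on_def
  proof (intro conjI ballI allI impI)
    fix a b :: 'a and u v :: real
    assume u: "u \<ge> 0" and v: "v \<ge> 0" and uv: "u + v = 1"
    obtain j where j: "j \<in> I" "f (u *\<^sub>R a + v *\<^sub>R b) = F j + inner (G j) ((u *\<^sub>R a + v *\<^sub>R b) - X j)"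
      using att by blast
    have eq: "F j + inner (G j) ((u *\<^sub>R a + v *\<^sub>R b) - X j)
        = u * (F j + inner (G j) (a - X j)) + v * (F j + inner (G j) (b - X j))"
    proof -
      have "(u *\<^sub>R a + v *\<^sub>R b) - X j = u *\<^sub>R (a - X j) + v *\<^sub>R (b - X j)"
        using uv by (simp add: algebra_simps flip: scaleR_add_left)
      moreover have "F j = u * F j + v * F j" using uv by (metis distrib_right mult_1)
      ultimately show ?thesis by (simp only: inner_add_right inner_scaleR_right distrib_left)
    qed
    have "u * (F j + inner (G j) (a - X j)) \<le> u * f a" using u ub[OF j(1)] by (simp add: mult_left_mono)
    moreover have "v * (F j + inner (G j) (b - X j)) \<le> v * f b" using v ub[OF j(1)] by (simp add: mult_left_mono)
    ultimately show "f (u *\<^sub>R a + v *\<^sub>R b) \<le> u * f a + v * f b" using j eq by linarith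
  qed simp
  have val: "f (X i) = F i" if "i \<in> I" for i
  proof -
    obtain j where j: "j \<in> I" "f (X i) = F j + inner (G j) (X i - X j)" using att by blast
    have "f (X i) \<le> F i"
      using j cond that by (cases "i = j") force+
    moreover have "F i \<le> f (X i)" using ub[OF that, of "X i"] by simp
    ultimately show ?thesis by simp
  qed
  show ?thesis
  proof (intro exI[of _ f] conjI cvx ballI)
    fix i assume i: "i \<in> I"
    show "F i = f (X i)" using val[OF i] by simp
    show "G i \<in> subdifferential f (X i)"
      unfolding subdifferential_def using val[OF i] ub[OF i] by auto
  qed
qed

theorem corollary4p3:
  fixes L :: real and I :: "'i set"
    and x g s :: "'i \<Rightarrow> real ^ 'n" and fv hv :: "'i \<Rightarrow> real"
  assumes "L > 0" and "finite I"
  shows "(\<exists>f h :: real ^ 'n \<Rightarrow> real.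
            convex_on UNIV f \<and> convex_on UNIV (\<lambda>y. L * h y - f y) \<and>
            (\<forall>i\<in>I. fv i = f (x i) \<and> g i \<in> subdifferential f (x i) \<and>
                    hv i = h (x i) \<and> s i \<in> subdifferential h (x i) \<and>
                    L *\<^sub>R s i - g i \<in> subdifferential (\<lambda>y. L * h y - f y) (x i)))
     \<longleftrightarrow>
     (\<forall>i\<in>I. \<forall>j\<in>I. i \<noteq> j \<longrightarrow>
        fv i - fv j - inner (g j) (x i - x j) \<ge> 0 \<and>
        (L * hv i - fv i) - (L * hv j - fv j) - inner (L *\<^sub>R s j - g j) (x i - x j) \<ge> 0)"
  (is "?A \<longleftrightarrow> ?B")
proof
  assume ?A
  then obtain f h :: "real ^ 'n \<Rightarrow> real" where
    H: "\<forall>i\<in>I. fv i = f (x i) \<and> g i \<in> subdifferential f (x i) \<and>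
                    hv i = h (x i) \<and> s i \<in> subdifferential h (x i) \<and>
                    L *\<^sub>R s i - g i \<in> subdifferential (\<lambda>y. L * h y - f y) (x i)"
    by blast
  show ?B
  proof (intro ballI impI conjI)
    fix i j assume i: "i \<in> I" and j: "j \<in> I"
    have "f (x i) \<ge> f (x j) + inner (g j) (x i - x j)"
      using H j unfolding subdifferential_def by blast
    then show "fv i - fv j - inner (g j) (x i - x j) \<ge> 0"
      using H i j by simp
    have "L * h (x i) - f (x i) \<ge> L * h (x j) - f (x j) + inner (L *\<^sub>R s j - g j) (x i - x j)"
      using H j unfolding subdifferential_def by blast
    then show "(L * hv i - fv i) - (L * hv j - fv j) - inner (L *\<^sub>R s j - g j) (x i - x j) \<ge> 0"
      using H i j by simp
  qed
next
  assume B: ?B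
  obtain f where f: "convex_on UNIV f" "\<forall>i\<in>I. fv i = f (x i) \<and> g i \<in> subdifferential f (x i)"
    using interp_aux[OF assms(2), of fv g x] B by blast
  obtain p where p: "convex_on UNIV p"
    "\<forall>i\<in>I. L * hv i - fv i = p (x i) \<and> L *\<^sub>R s i - g i \<in> subdifferential p (x i)"
    using interp_aux[OF assms(2), of "\<lambda>i. L * hv i - fv i" "\<lambda>i. L *\<^sub>R s i - g i" x] B by blast
  define h where "h y = (f y + p y) / L" for y
  have hp: "(\<lambda>y. L * h y - f y) = p" using assms(1) by (auto simp: h_def)
  have c2: "convex_on UNIV (\<lambda>y. L * h y - f y)" using hp p by simp
  show ?A
  proof (rule exI[of _ f], rule exI[of _ h], intro conjI f(1) c2 ballI)
    fix i assume i: "i \<in> I"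
    show "fv i = f (x i)" "g i \<in> subdifferential f (x i)" using f i by auto
    show "L *\<^sub>R s i - g i \<in> subdifferential (\<lambda>y. L * h y - f y) (x i)" using hp p i by simp
    show "hv i = h (x i)" using f p i assms(1) by (auto simp: h_def field_simps)
    show "s i \<in> subdifferential h (x i)"
      unfolding subdifferential_def
    proof
      show "\<forall>y. h (x i) + inner (s i) (y - x i) \<le> h y"
      proof
        fix y
        have 1: "f y \<ge> f (x i) + inner (g i) (y - x i)" using f i unfolding subdifferential_def by blast
        have 2: "p y \<ge> p (x i) + inner (L *\<^sub>R s i - g i) (y - x i)" using p i unfolding subdifferential_def by blast
        have "f y + p y \<ge> f (x i) + p (x i) + L * inner (s i) (y - x i)"
          using 1 2 by (simp add: inner_diff_left)
        then have "(f (x i) + p (x i)) / L + inner (s i) (y - x i) \<le> (f y + p y) / L"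
        proof -
          have e: "(f (x i) + p (x i)) / L + inner (s i) (y - x i) = (f (x i) + p (x i) + L * inner (s i) (y - x i)) / L"
            using assms(1) by (simp add: add_divide_distrib)
          show ?thesis unfolding e using assms(1) \<open>f y + p y \<ge> _\<close> by (simp add: divide_right_mono)
        qed
        then show "h (x i) + inner (s i) (y - x i) \<le> h y" by (simp add: h_def)
      qed
    qed
  qed
qed

end
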